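(* Let $A$ be a ring, $M$ a left $A$-module, $W$ a multiplicative subset of $A$, $V$ a multiplicative submonoid of the center $Z(A)$ of $A$, and $S$ a subset of $M$. Then $G^{W,V}_M(S)$ is the smallest $V$-regular $W$-factroid of $M$ containing $S$.
   Context: Rings are unital, not necessarily commutative. A $W$-factroid of $M$ is an additive subgroup $F$ of $M$ such that for all $x\in M$ and $w\in W$, $wx\in F$ implies $x\in F$; for $X\subseteq M$, $[X]^W_M$ is the smallest $W$-factroid of $M$ containing $X$. For $h\in A$ and $X\subseteq M$, $hX=\{hx\mid x\in X\}$. For $T\subseteq A$, a $W$-factroid $F$ of $M$ is $T$-regular if for all $h\in T$ and $x\in M$, $hx\in[hF]^W_M$ implies $x\in F$. $G^{W,V}_M(S):=\{x\in M\mid hx\in[hS]^W_M \text{ for some } h\in V\}$. *)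

theory Defs
  imports Main
begin

definition left_module :: "('a::ring_1 \<Rightarrow> 'm::ab_group_add \<Rightarrow> 'm) \<Rightarrow> bool" where
  "left_module sm \<longleftrightarrow>
     (\<forall>a x y. sm a (x + y) = sm a x + sm a y) \<and>
     (\<forall>a b x. sm (a + b) x = sm a x + sm b x) \<and>
     (\<forall>a b x. sm (a * b) x = sm a (sm b x)) \<and>
     (\<forall>x. sm 1 x = x)"

definition multiplicative_subset :: "'a::ring_1 set \<Rightarrow> bool" where
  "multiplicative_subset W \<longleftrightarrow> 1 \<in> W \<and> (\<forall>a\<in>W. \<forall>b\<in>W. a * b \<in> W)"

definition ring_center :: "'a::ring_1 set" where
  "ring_center = {z. \<forall>a. z * a = a * z}"

definition additive_subgroup :: "'m::ab_group_add set \<Rightarrow> bool" where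
  "additive_subgroup F \<longleftrightarrow> 0 \<in> F \<and> (\<forall>x\<in>F. \<forall>y\<in>F. x + y \<in> F) \<and> (\<forall>x\<in>F. - x \<in> F)"

definition factroid ::
  "('a::ring_1 \<Rightarrow> 'm::ab_group_add \<Rightarrow> 'm) \<Rightarrow> 'a set \<Rightarrow> 'm set \<Rightarrow> bool" where
  "factroid sm W F \<longleftrightarrow> additive_subgroup F \<and> (\<forall>x w. w \<in> W \<longrightarrow> sm w x \<in> F \<longrightarrow> x \<in> F)"

definition factroid_hull ::
  "('a::ring_1 \<Rightarrow> 'm::ab_group_add \<Rightarrow> 'm) \<Rightarrow> 'a set \<Rightarrow> 'm set \<Rightarrow> 'm set" where
  "factroid_hull sm W X = \<Inter>{F. factroid sm W F \<and> X \<subseteq> F}"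

definition regular_factroid ::
  "('a::ring_1 \<Rightarrow> 'm::ab_group_add \<Rightarrow> 'm) \<Rightarrow> 'a set \<Rightarrow> 'a set \<Rightarrow> 'm set \<Rightarrow> bool" where
  "regular_factroid sm W T F \<longleftrightarrow> factroid sm W F \<and>
     (\<forall>h\<in>T. \<forall>x. sm h x \<in> factroid_hull sm W (sm h ` F) \<longrightarrow> x \<in> F)"

definition G_set ::
  "('a::ring_1 \<Rightarrow> 'm::ab_group_add \<Rightarrow> 'm) \<Rightarrow> 'a set \<Rightarrow> 'a set \<Rightarrow> 'm set \<Rightarrow> 'm set" where
  "G_set sm W V S = {x. \<exists>h\<in>V. sm h x \<in> factroid_hull sm W (sm h ` S)}"

end

theory Submission
  imports Defs
begin

lemma hull_factroid: "factroid sm W (factroid_hull sm W X)"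
  unfolding factroid_hull_def factroid_def additive_subgroup_def by blast

lemma hull_sub: "X \<subseteq> factroid_hull sm W X"
  unfolding factroid_hull_def by blast

lemma hull_least: "factroid sm W F \<Longrightarrow> X \<subseteq> F \<Longrightarrow> factroid_hull sm W X \<subseteq> F"
  unfolding factroid_hull_def by blast

lemma hull_mono: "X \<subseteq> Y \<Longrightarrow> factroid_hull sm W X \<subseteq> factroid_hull sm W Y"
  unfolding factroid_hull_def by blast

lemma sm_zero: "left_module sm \<Longrightarrow> sm a 0 = 0"
proof -
  assume lm: "left_module sm"
  have "sm a (0 + 0) = sm a 0 + sm a 0" using lm unfolding left_module_def by blast
  then show ?thesis by simp
qed

lemma sm_neg: "left_module sm \<Longrightarrow> sm a (- x) = - sm a x"
proof -
  assume lm: "left_module sm"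
  have "sm a (x + - x) = sm a x + sm a (- x)" using lm unfolding left_module_def by blast
  then have "sm a x + sm a (- x) = 0" using sm_zero[OF lm, of a] by simp
  then show ?thesis by (simp add: add_eq_0_iff)
qed

lemma sm_mult: "left_module sm \<Longrightarrow> sm (a * b) x = sm a (sm b x)"
  unfolding left_module_def by blast

lemma sm_add: "left_module sm \<Longrightarrow> sm a (x + y) = sm a x + sm a y"
  unfolding left_module_def by blast

lemma sm_one: "left_module sm \<Longrightarrow> sm 1 x = x"
  unfolding left_module_def by blast

lemma sm_one_img: "left_module sm \<Longrightarrow> sm 1 ` X = X"
  using sm_one[of sm] by simp

lemma sm_comm:
  assumes lm: "left_module sm" and h: "h \<in> ring_center"
  shows "sm h (sm w x) = sm w (sm h x)"
proof -
  have hw: "h * w = w * h" using h unfolding ring_center_def by simp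
  have "sm h (sm w x) = sm (h*w) x" by (simp add: sm_mult[OF lm])
  also have "... = sm (w*h) x" by (simp only: hw)
  also have "... = sm w (sm h x)" by (simp add: sm_mult[OF lm])
  finally show ?thesis .
qed

lemma hull_0: "0 \<in> factroid_hull sm W X"
  using hull_factroid[of sm W X] unfolding factroid_def additive_subgroup_def by blast

lemma hull_add: "x \<in> factroid_hull sm W X \<Longrightarrow> y \<in> factroid_hull sm W X \<Longrightarrow> x + y \<in> factroid_hull sm W X"
  using hull_factroid[of sm W X] unfolding factroid_def additive_subgroup_def by blast

lemma hull_neg: "x \<in> factroid_hull sm W X \<Longrightarrow> - x \<in> factroid_hull sm W X"
  using hull_factroid[of sm W X] unfolding factroid_def additive_subgroup_def by blast

lemma hull_fac: "w \<in> W \<Longrightarrow> sm w x \<in> factroid_hull sm W X \<Longrightarrow> x \<in> factroid_hull sm W X"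
  using hull_factroid[of sm W X] unfolding factroid_def by blast

lemma scale_hull:
  assumes lm: "left_module sm" and k: "k \<in> ring_center"
    and y: "y \<in> factroid_hull sm W X"
  shows "sm k y \<in> factroid_hull sm W (sm k ` X)"
proof -
  let ?H = "factroid_hull sm W (sm k ` X)"
  let ?F = "{y. sm k y \<in> ?H}"
  have HF: "factroid sm W ?H" by (rule hull_factroid)
  have "factroid sm W ?F"
    unfolding factroid_def additive_subgroup_def
  proof (intro conjI ballI allI impI)
    show "0 \<in> ?F" using HF sm_zero[OF lm] unfolding factroid_def additive_subgroup_def by simp
  next
    fix a b assume "a \<in> ?F" "b \<in> ?F"
    then show "a + b \<in> ?F" using HF sm_add[OF lm] unfolding factroid_def additive_subgroup_def by simp
  next
    fix a assume "a \<in> ?F"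
    then show "- a \<in> ?F" using HF sm_neg[OF lm] unfolding factroid_def additive_subgroup_def by simp
  next
    fix a w assume w: "w \<in> W" and "sm w a \<in> ?F"
    then have "sm k (sm w a) \<in> ?H" by simp
    also have "sm k (sm w a) = sm w (sm k a)"
      by (rule sm_comm[OF lm k])
    finally show "a \<in> ?F" using HF w unfolding factroid_def by simp
  qed
  moreover have "X \<subseteq> ?F" using hull_sub[of "sm k ` X" sm W] by auto
  ultimately show ?thesis using hull_least y by blast
qed

lemma comp2:
  assumes lm: "left_module sm" and k: "k \<in> ring_center"
  shows "sm k (sm h x) = sm (h * k) x"
  using sm_comm[OF lm k] sm_mult[OF lm] by simp

lemma comp2_img:
  assumes lm: "left_module sm" and k: "k \<in> ring_center"
  shows "sm k ` sm h ` T = sm (h * k) ` T"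
  unfolding image_image using comp2[OF lm k] by simp

lemma G_factroid:
  assumes lm: "left_module sm"
    and V: "V \<subseteq> ring_center" "1 \<in> V" "\<forall>a\<in>V. \<forall>b\<in>V. a * b \<in> V"
  shows "factroid sm W (G_set sm W V T)"
  unfolding factroid_def additive_subgroup_def
proof (intro conjI ballI allI impI)
  show "0 \<in> G_set sm W V T"
    unfolding G_set_def using V(2) sm_zero[OF lm] hull_0 by fastforce
next
  fix x y assume x: "x \<in> G_set sm W V T" and y: "y \<in> G_set sm W V T"
  from x obtain h where h: "h \<in> V" "sm h x \<in> factroid_hull sm W (sm h ` T)"
    unfolding G_set_def by blast
  from y obtain k where k: "k \<in> V" "sm k y \<in> factroid_hull sm W (sm k ` T)"
    unfolding G_set_def by blast
  have hc: "h \<in> ring_center" and kc: "k \<in> ring_center" using h k V by auto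
  have comm: "k * h = h * k" using hc unfolding ring_center_def by auto
  have 1: "sm (h*k) x \<in> factroid_hull sm W (sm (h * k) ` T)"
    using scale_hull[OF lm kc h(2)] unfolding comp2[OF lm kc] comp2_img[OF lm kc] comm .
  have 2: "sm (h*k) y \<in> factroid_hull sm W (sm (h * k) ` T)"
    using scale_hull[OF lm hc k(2)] unfolding comp2[OF lm hc] comp2_img[OF lm hc] comm .
  have "sm (h*k) (x + y) \<in> factroid_hull sm W (sm (h * k) ` T)"
    unfolding sm_add[OF lm] by (rule hull_add[OF 1 2])
  moreover have "h * k \<in> V" using h k V by blast
  ultimately show "x + y \<in> G_set sm W V T" unfolding G_set_def by blast
next
  fix x assume "x \<in> G_set sm W V T"
  then obtain h where h: "h \<in> V" "sm h x \<in> factroid_hull sm W (sm h ` T)"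
    unfolding G_set_def by blast
  then have "sm h (- x) \<in> factroid_hull sm W (sm h ` T)"
    unfolding sm_neg[OF lm] by (intro hull_neg) 
  then show "- x \<in> G_set sm W V T" using h unfolding G_set_def by blast
next
  fix x w assume w: "w \<in> W" and "sm w x \<in> G_set sm W V T"
  then obtain h where h: "h \<in> V" "sm h (sm w x) \<in> factroid_hull sm W (sm h ` T)"
    unfolding G_set_def by blast
  have hc: "h \<in> ring_center" using h V by auto
  have "sm w (sm h x) \<in> factroid_hull sm W (sm h ` T)"
    using h(2) unfolding sm_comm[OF lm hc] .
  then have "sm h x \<in> factroid_hull sm W (sm h ` T)"
    by (rule hull_fac[OF w])
  then show "x \<in> G_set sm W V T" using h unfolding G_set_def by blast
qed

theorem proposition6p13:
  fixes sm :: "'a::ring_1 \<Rightarrow> 'm::ab_group_add \<Rightarrow> 'm"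
    and W V :: "'a set" and S :: "'m set"
  assumes "left_module sm"
    and "multiplicative_subset W"
    and "V \<subseteq> ring_center" and "1 \<in> V" and "\<forall>a\<in>V. \<forall>b\<in>V. a * b \<in> V"
  shows "regular_factroid sm W V (G_set sm W V S) \<and> S \<subseteq> G_set sm W V S \<and>
         (\<forall>F. regular_factroid sm W V F \<and> S \<subseteq> F \<longrightarrow> G_set sm W V S \<subseteq> F)"
proof (intro conjI allI impI)
  note lm = assms(1) and V = assms(3-5)
  show "S \<subseteq> G_set sm W V S"
  proof
    fix x assume "x \<in> S"
    then have "sm 1 x \<in> factroid_hull sm W (sm 1 ` S)"
      unfolding sm_one[OF lm] sm_one_img[OF lm] using hull_sub by blast
    then show "x \<in> G_set sm W V S" using V(2) unfolding G_set_def by blast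
  qed
  show "G_set sm W V S \<subseteq> F" if "regular_factroid sm W V F \<and> S \<subseteq> F" for F
  proof
    fix x assume "x \<in> G_set sm W V S"
    then obtain h where h: "h \<in> V" "sm h x \<in> factroid_hull sm W (sm h ` S)"
      unfolding G_set_def by blast
    then have "sm h x \<in> factroid_hull sm W (sm h ` F)"
      using hull_mono[of "sm h ` S" "sm h ` F" sm W] that by blast
    then show "x \<in> F" using that h unfolding regular_factroid_def by blast
  qed
  show "regular_factroid sm W V (G_set sm W V S)"
    unfolding regular_factroid_def
  proof (intro conjI ballI allI impI)
    show "factroid sm W (G_set sm W V S)" by (rule G_factroid[OF lm V])
    fix h x assume h: "h \<in> V"
      and hx: "sm h x \<in> factroid_hull sm W (sm h ` G_set sm W V S)"
    have hc: "h \<in> ring_center" using h V by auto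
    have "sm h ` G_set sm W V S \<subseteq> G_set sm W V (sm h ` S)"
    proof
      fix z assume "z \<in> sm h ` G_set sm W V S"
      then obtain g where z: "z = sm h g" and "g \<in> G_set sm W V S" by blast
      then obtain k where k: "k \<in> V" "sm k g \<in> factroid_hull sm W (sm k ` S)"
        unfolding G_set_def by blast
      have kc: "k \<in> ring_center" using k V by auto
      have comm: "k * h = h * k" using hc unfolding ring_center_def by auto
      have "sm h (sm k g) \<in> factroid_hull sm W (sm h ` sm k ` S)"
        by (rule scale_hull[OF lm hc k(2)])
      then have "sm k (sm h g) \<in> factroid_hull sm W (sm k ` sm h ` S)"
        unfolding comp2[OF lm hc] comp2_img[OF lm hc] comp2[OF lm kc] comp2_img[OF lm kc] comm .
      then show "z \<in> G_set sm W V (sm h ` S)" using k z unfolding G_set_def by blast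
    qed
    then have "factroid_hull sm W (sm h ` G_set sm W V S) \<subseteq> G_set sm W V (sm h ` S)"
      by (rule hull_least[OF G_factroid[OF lm V]])
    with hx have "sm h x \<in> G_set sm W V (sm h ` S)" by (rule rev_subsetD)
    then obtain k where k: "k \<in> V" "sm k (sm h x) \<in> factroid_hull sm W (sm k ` sm h ` S)"
      unfolding G_set_def by blast
    have "sm (k * h) x \<in> factroid_hull sm W (sm (k * h) ` S)"
      using k(2) unfolding sm_mult[OF lm] image_image .
    moreover have "k * h \<in> V" using k h V by blast
    ultimately show "x \<in> G_set sm W V S" unfolding G_set_def by blast
  qed
qed

end
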